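(* Let $\rho>0$ and suppose that, for each value of $c^S>0$, the variable-window IPT thresholds satisfy $c_n^D=0$ for all $n\leq(1+\rho)\frac{c^S}{\underline{q}}$ (the values $c_n^D\geq0$ for larger $n$ being arbitrary). Then for every $f_1\in\mathcal{P}_1$, $$\limsup_{c^S\to\infty}\frac{E_{f_1,1}t_I}{c^S}\leq\frac{1}{q(f_1)}.$$
   Context: Setup. Let $\mathcal{A}=\{a_1,\dots,a_m\}$ be a finite alphabet and $\mathcal{P}$ the set of probability mass functions (p.m.f.s) on $\mathcal{A}$. $I(f\|f')=\sum_{a}f(a)\log\frac{f(a)}{f'(a)}$ is the Kullback–Leibler divergence. A known pre-change p.m.f. $f_0\in\mathcal{P}$ is fixed. $q:\mathcal{P}\to\mathbb{R}$ is quasiconcave and $L$-Lipschitz with respect to $\ell_1$, with $q_0:=q(f_0)<0<\underline{q}$, and the set of possible post-change p.m.f.s $\mathcal{P}_1$ is a nonempty subset of $\{f: q(f)\geq\underline{q}\}$. Under $P_{f_1,1}$ (expectation $E_{f_1,1}$) the observations $X_1,X_2,\dots$ are i.i.d. $f_1$. For $i\leq j$, $\hat f_{X_i^j}$ is the empirical p.m.f. of $X_i,\dots,X_j$. Variable-window IPT. Parameters: $c^S>0$ and a sequence $(c_n^D)_{n\geq1}$ of nonnegative thresholds. For $n\geq1$ let $f_n^*=\arg\min_{f\in\mathcal{P}:\,q(f)\geq c^S/n}I(f\|f_0)$. Put $Q(i,j)=(j-i+1)q(\hat f_{X_i^j})$ for $i\leq j$ and $Q(j+1,j)=0$. Set $\tau_1=1$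 and for $k\geq1$: $S_k=\max_{\tau_k\leq i\leq k+1}Q(i,k)$, with $i_k$ a maximizing index and $n_k=k-i_k+1$; $D_k=I(\hat f_{X_{i_k}^k}\|f_{n_k}^* )$; $\tau_{k+1}=k+1$ if $S_k\geq c^S$ and $D_k<c^D_{n_k}$ (restart), and $\tau_{k+1}=\tau_k$ otherwise. The IPT stopping time is $t_I=\inf\{k: S_k\geq c^S\text{ and }D_k\geq c^D_{n_k}\}$. *)

theory Defs
  imports "HOL-Probability.Probability"
begin

definition pmfs :: "('a::finite \<Rightarrow> real) set" where
  "pmfs = {f. (\<forall>a. 0 \<le> f a) \<and> (\<Sum>a\<in>UNIV. f a) = 1}"

definition KL :: "('a::finite \<Rightarrow> real) \<Rightarrow> ('a \<Rightarrow> real) \<Rightarrow> ereal" where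
  "KL f g = (\<Sum>a\<in>UNIV. if f a = 0 then 0
                         else if g a = 0 then \<infinity>
                         else ereal (f a * ln (f a / g a)))"

definition l1dist :: "('a::finite \<Rightarrow> real) \<Rightarrow> ('a \<Rightarrow> real) \<Rightarrow> real" where
  "l1dist f g = (\<Sum>a\<in>UNIV. \<bar>f a - g a\<bar>)"

definition quasiconcave_on_pmfs :: "(('a::finite \<Rightarrow> real) \<Rightarrow> real) \<Rightarrow> bool" where
  "quasiconcave_on_pmfs q \<longleftrightarrow>
     (\<forall>f\<in>pmfs. \<forall>g\<in>pmfs. \<forall>t::real. 0 \<le> t \<and> t \<le> 1 \<longrightarrow>
        min (q f) (q g) \<le> q (\<lambda>a. (1 - t) * f a + t * g a))"

definition lipschitz_l1_on_pmfs :: "real \<Rightarrow> (('a::finite \<Rightarrow> real) \<Rightarrow> real) \<Rightarrow> bool" where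
  "lipschitz_l1_on_pmfs L q \<longleftrightarrow> (\<forall>f\<in>pmfs. \<forall>g\<in>pmfs. \<bar>q f - q g\<bar> \<le> L * l1dist f g)"

text \<open>Observations are a path \<omega> :: nat => 'a; X_t = \<omega> t for t >= 1 (\<omega> 0 is unused).
  Empirical p.m.f. of X_i, ..., X_j.\<close>
definition emp :: "(nat \<Rightarrow> 'a::finite) \<Rightarrow> nat \<Rightarrow> nat \<Rightarrow> 'a \<Rightarrow> real" where
  "emp \<omega> i j a = real (card {t\<in>{i..j}. \<omega> t = a}) / real (Suc j - i)"

definition Qstat :: "(('a::finite \<Rightarrow> real) \<Rightarrow> real) \<Rightarrow> (nat \<Rightarrow> 'a) \<Rightarrow> nat \<Rightarrow> nat \<Rightarrow> real" where
  "Qstat q \<omega> i j = (if i \<le> j then real (Suc j - i) * q (emp \<omega> i j) else 0)"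

text \<open>Maximizing index i_k given the current window start tau (ties broken by the
  smallest index, i.e. the longest window).\<close>
definition imax :: "(('a::finite \<Rightarrow> real) \<Rightarrow> real) \<Rightarrow> (nat \<Rightarrow> 'a) \<Rightarrow> nat \<Rightarrow> nat \<Rightarrow> nat" where
  "imax q \<omega> tau k = (LEAST i. tau \<le> i \<and> i \<le> Suc k \<and>
       (\<forall>j. tau \<le> j \<and> j \<le> Suc k \<longrightarrow> Qstat q \<omega> j k \<le> Qstat q \<omega> i k))"

definition Sstat where "Sstat q \<omega> tau k = Qstat q \<omega> (imax q \<omega> tau k) k"
definition nstat where "nstat q \<omega> tau k = Suc k - imax q \<omega> tau k"
definition Dstat :: "(('a::finite \<Rightarrow> real) \<Rightarrow> real) \<Rightarrow> (nat \<Rightarrow> 'a \<Rightarrow> real) \<Rightarrow> (nat \<Rightarrow> 'a) \<Rightarrow> nat \<Rightarrow> nat \<Rightarrow> ereal" where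
  "Dstat q fstar \<omega> tau k = KL (emp \<omega> (imax q \<omega> tau k) k) (fstar (nstat q \<omega> tau k))"

text \<open>Window starts: ipt_tau ... k = tau_k for k >= 1 (value at 0 is a dummy).\<close>
primrec ipt_tau :: "(('a::finite \<Rightarrow> real) \<Rightarrow> real) \<Rightarrow> (nat \<Rightarrow> 'a \<Rightarrow> real) \<Rightarrow> real \<Rightarrow> (nat \<Rightarrow> real)
     \<Rightarrow> (nat \<Rightarrow> 'a) \<Rightarrow> nat \<Rightarrow> nat" where
  "ipt_tau q fstar cS cD \<omega> 0 = 1"
| "ipt_tau q fstar cS cD \<omega> (Suc k) =
     (if k = 0 then 1
      else (let tau = ipt_tau q fstar cS cD \<omega> k in
            if cS \<le> Sstat q \<omega> tau k \<and> Dstat q fstar \<omega> tau k < ereal (cD (nstat q \<omega> tau k))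
            then Suc k else tau))"

definition ipt_alarm where
  "ipt_alarm q fstar cS cD \<omega> k \<longleftrightarrow> (let tau = ipt_tau q fstar cS cD \<omega> k in
      cS \<le> Sstat q \<omega> tau k \<and> ereal (cD (nstat q \<omega> tau k)) \<le> Dstat q fstar \<omega> tau k)"

definition ipt_time :: "(('a::finite \<Rightarrow> real) \<Rightarrow> real) \<Rightarrow> (nat \<Rightarrow> 'a \<Rightarrow> real) \<Rightarrow> real \<Rightarrow> (nat \<Rightarrow> real)
     \<Rightarrow> (nat \<Rightarrow> 'a) \<Rightarrow> enat" where
  "ipt_time q fstar cS cD \<omega> =
     (if \<exists>k\<ge>1. ipt_alarm q fstar cS cD \<omega> k
      then enat (LEAST k. 1 \<le> k \<and> ipt_alarm q fstar cS cD \<omega> k) else \<infinity>)"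

definition obs_law :: "('a::finite \<Rightarrow> real) \<Rightarrow> (nat \<Rightarrow> 'a) measure" where
  "obs_law f1 = PiM UNIV (\<lambda>_. measure_pmf (embed_pmf f1))"

definition is_fstar :: "(('a::finite \<Rightarrow> real) \<Rightarrow> real) \<Rightarrow> ('a \<Rightarrow> real) \<Rightarrow> real \<Rightarrow> nat \<Rightarrow> ('a \<Rightarrow> real) \<Rightarrow> bool" where
  "is_fstar q f0 cS n f \<longleftrightarrow> f \<in> pmfs \<and> cS / real n \<le> q f \<and>
      (\<forall>g\<in>pmfs. cS / real n \<le> q g \<longrightarrow> KL f f0 \<le> KL g f0)"

end

theory Submission
  imports Defs
begin


lemma KL_nonneg:
  assumes f: "f \<in> pmfs" and g: "g \<in> pmfs"
  shows "0 \<le> KL f g"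
proof -
  have "(\<Sum>a\<in>UNIV. ereal (f a - g a)) \<le> KL f g"
    unfolding KL_def
  proof (rule sum_mono)
    fix a :: 'a
    have f0: "0 \<le> f a" and g0: "0 \<le> g a" using f g by (auto simp: pmfs_def)
    show "ereal (f a - g a) \<le> (if f a = 0 then 0 else if g a = 0 then \<infinity> else ereal (f a * ln (f a / g a)))"
    proof (cases "f a = 0")
      case True then show ?thesis using g0 by simp
    next
      case False
      then have fp: "f a > 0" using f0 by simp
      show ?thesis
      proof (cases "g a = 0")
        case True then show ?thesis using False by simp
      next
        case False2: False
        then have gp: "g a > 0" using g0 by simp
        have "ln (g a / f a) \<le> g a / f a - 1" using fp gp by (intro ln_le_minus_one) simp
        then have "f a * ln (g a / f a) \<le> f a * (g a / f a - 1)" using fp by (intro mult_left_mono) auto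
        also have "\<dots> = g a - f a" using fp by (simp add: field_simps)
        finally have "f a - g a \<le> f a * ln (f a / g a)"
          using fp gp by (simp add: ln_div right_diff_distrib)
        then show ?thesis using False False2 by simp
      qed
    qed
  qed
  also have "(\<Sum>a\<in>UNIV. ereal (f a - g a)) = ereal ((\<Sum>a\<in>UNIV. f a) - (\<Sum>a\<in>UNIV. g a))"
    by (simp add: sum_subtractf)
  also have "\<dots> = 0" using f g by (simp add: pmfs_def)
  finally show ?thesis by simp
qed

lemma imax_props:
  assumes "tau \<le> Suc k"
  shows "tau \<le> imax q \<omega> tau k \<and> imax q \<omega> tau k \<le> Suc k \<and>
         (\<forall>j. tau \<le> j \<and> j \<le> Suc k \<longrightarrow> Qstat q \<omega> j k \<le> Qstat q \<omega> (imax q \<omega> tau k) k)"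
proof -
  let ?R = "{tau..Suc k}"
  have fin: "finite ((\<lambda>j. Qstat q \<omega> j k) ` ?R)" by simp
  have ne: "(\<lambda>j. Qstat q \<omega> j k) ` ?R \<noteq> {}" using assms by auto
  obtain i where i: "i \<in> ?R" "Qstat q \<omega> i k = Max ((\<lambda>j. Qstat q \<omega> j k) ` ?R)"
    using Max_in[OF fin ne] by auto
  have "tau \<le> i \<and> i \<le> Suc k \<and> (\<forall>j. tau \<le> j \<and> j \<le> Suc k \<longrightarrow> Qstat q \<omega> j k \<le> Qstat q \<omega> i k)"
    using i fin by auto
  then show ?thesis unfolding imax_def by (rule LeastI)
qed

lemma emp_pmf:
  assumes "i \<le> j"
  shows "emp \<omega> i j \<in> pmfs"
proof -
  have c: "card {t\<in>A. P t} = (\<Sum>t\<in>A. if P t then 1 else 0)" if "finite A" for A :: "nat set" and P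
    using that by (simp add: sum.inter_filter[symmetric])
  have "(\<Sum>a\<in>UNIV. card {t\<in>{i..j}. \<omega> t = a}) = (\<Sum>a\<in>UNIV. \<Sum>t\<in>{i..j}. if \<omega> t = a then 1 else 0)"
    by (intro sum.cong refl c) simp
  also have "\<dots> = (\<Sum>t\<in>{i..j}. \<Sum>a\<in>UNIV. if \<omega> t = a then 1 else 0)" by (rule sum.swap)
  also have "\<dots> = card {i..j}" by simp
  finally have s: "(\<Sum>a\<in>UNIV. real (card {t\<in>{i..j}. \<omega> t = a})) = real (Suc j - i)"
    by (metis card_atLeastAtMost of_nat_sum)
  have "Suc j - i > 0" using assms by simp
  then show ?thesis using s unfolding pmfs_def emp_def by (auto simp: sum_divide_distrib[symmetric])
qed

context
  fixes q :: "('a::finite \<Rightarrow> real) \<Rightarrow> real" and f0 :: "'a \<Rightarrow> real" and cS K :: real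
    and fs :: "nat \<Rightarrow> 'a \<Rightarrow> real" and cd :: "nat \<Rightarrow> real"
  assumes cS_pos: "0 < cS"
    and fs: "\<And>n. 1 \<le> n \<Longrightarrow> (\<exists>f\<in>pmfs. cS / real n \<le> q f) \<Longrightarrow> is_fstar q f0 cS n (fs n)"
    and cd0: "\<And>n. real n \<le> K \<Longrightarrow> cd n = 0"
begin

abbreviation "tau \<omega> k \<equiv> ipt_tau q fs cS cd \<omega> k"

lemma tau_ge1: "1 \<le> tau \<omega> k"
  by (induction k) (auto simp: Let_def)

lemma tau_le: "1 \<le> k \<Longrightarrow> tau \<omega> k \<le> k"
  by (induction k) (auto simp: Let_def)

lemma tau_fix: "tau \<omega> (tau \<omega> k) = tau \<omega> k"
proof (induction k)
  case 0 then show ?case by simp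
next
  case (Suc k)
  show ?case
  proof (cases "k = 0")
    case True then show ?thesis by simp
  next
    case False
    show ?thesis
    proof (cases "cS \<le> Sstat q \<omega> (tau \<omega> k) k \<and> Dstat q fs \<omega> (tau \<omega> k) k < ereal (cd (nstat q \<omega> (tau \<omega> k) k))")
      case True
      then have "tau \<omega> (Suc k) = Suc k" using False by (simp add: Let_def)
      then show ?thesis by simp
    next
      case F: False
      then have "tau \<omega> (Suc k) = tau \<omega> k" using False F by (auto simp: Let_def)
      then show ?thesis using Suc by simp
    qed
  qed
qed

lemma S_big:
  assumes "t \<le> k" "cS \<le> Sstat q \<omega> t k"
  shows "imax q \<omega> t k \<le> k \<and> 1 \<le> nstat q \<omega> t k \<and> nstat q \<omega> t k \<le> Suc k - t
         \<and> 0 \<le> Dstat q fs \<omega> t k"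
proof -
  let ?i = "imax q \<omega> t k"
  have P: "t \<le> ?i" "?i \<le> Suc k" using imax_props[of t k q \<omega>] assms by auto
  have Q: "cS \<le> Qstat q \<omega> ?i k" using assms(2) by (simp add: Sstat_def)
  have ik: "?i \<le> k"
  proof (rule ccontr)
    assume "\<not> ?i \<le> k"
    then have "Qstat q \<omega> ?i k = 0" by (simp add: Qstat_def)
    with Q cS_pos show False by simp
  qed
  define n where "n = Suc k - ?i"
  have n1: "1 \<le> n" using ik by (simp add: n_def)
  have "cS \<le> real n * q (emp \<omega> ?i k)" using Q ik by (simp add: Qstat_def n_def)
  then have qe: "cS / real n \<le> q (emp \<omega> ?i k)" using n1 by (simp add: field_simps)
  have ep: "emp \<omega> ?i k \<in> pmfs" using ik by (rule emp_pmf)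
  have "is_fstar q f0 cS n (fs n)" using fs[OF n1] qe ep by blast
  then have "fs n \<in> pmfs" by (simp add: is_fstar_def)
  then have "0 \<le> KL (emp \<omega> ?i k) (fs n)" using ep by (intro KL_nonneg)
  then show ?thesis using ik n1 P by (simp add: Dstat_def nstat_def n_def)
qed

lemma restart_long:
  assumes "t \<le> k" "cS \<le> Sstat q \<omega> t k" "Dstat q fs \<omega> t k < ereal (cd (nstat q \<omega> t k))"
  shows "K < real (nstat q \<omega> t k)"
proof (rule ccontr)
  assume "\<not> ?thesis"
  then have "cd (nstat q \<omega> t k) = 0" using cd0 by simp
  then have "Dstat q fs \<omega> t k < 0" using assms(3) by (simp add: zero_ereal_def)
  moreover have "0 \<le> Dstat q fs \<omega> t k" using S_big[OF assms(1,2)] by simp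
  ultimately show False by (meson leD)
qed

lemma stay:
  assumes "tau \<omega> s = s" "1 \<le> s" "real T \<le> K"
  shows "d < T \<Longrightarrow> tau \<omega> (s + d) = s"
proof (induction d)
  case 0 then show ?case using assms by simp
next
  case (Suc d)
  let ?k = "s + d"
  have tk: "tau \<omega> ?k = s" using Suc by simp
  have "\<not> (cS \<le> Sstat q \<omega> s ?k \<and> Dstat q fs \<omega> s ?k < ereal (cd (nstat q \<omega> s ?k)))"
  proof
    assume c: "cS \<le> Sstat q \<omega> s ?k \<and> Dstat q fs \<omega> s ?k < ereal (cd (nstat q \<omega> s ?k))"
    then have "K < real (nstat q \<omega> s ?k)" using restart_long[of s ?k] by simp
    moreover have "nstat q \<omega> s ?k \<le> Suc ?k - s" using S_big[of s ?k] c by simp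
    ultimately show False using Suc.prems assms(3) by simp
  qed
  then have "tau \<omega> (Suc ?k) = tau \<omega> ?k" using assms(2) tk by (simp add: Let_def)
  then show ?case using tk by simp
qed

lemma alarm_if:
  assumes "tau \<omega> k \<le> k" "cS \<le> Sstat q \<omega> (tau \<omega> k) k" "real (nstat q \<omega> (tau \<omega> k) k) \<le> K"
  shows "ipt_alarm q fs cS cd \<omega> k"
  using S_big[OF assms(1,2)] assms cd0[OF assms(3)] by (simp add: ipt_alarm_def Let_def zero_ereal_def[symmetric])

lemma G_alarm:
  assumes "tau \<omega> s = s" "1 \<le> s" "1 \<le> T" "real T \<le> K" "cS \<le> Qstat q \<omega> s (s + T - 1)"
  shows "ipt_alarm q fs cS cd \<omega> (s + T - 1)"
proof -
  let ?k = "s + T - 1"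
  have tk: "tau \<omega> ?k = s" using stay[OF assms(1,2,4), of "T - 1"] assms(3) by simp
  have "Qstat q \<omega> s ?k \<le> Sstat q \<omega> s ?k"
    using imax_props[of s ?k q \<omega>] by (simp add: Sstat_def)
  then have S: "cS \<le> Sstat q \<omega> s ?k" using assms(5) by simp
  have "nstat q \<omega> s ?k \<le> T" using S_big[of s ?k \<omega>] S assms(3) by simp
  then have "real (nstat q \<omega> s ?k) \<le> K" using assms(4) by (meson of_nat_le_iff order_trans)
  then show ?thesis using alarm_if[of \<omega> ?k] tk S assms(3) by simp
qed

lemma time_le:
  assumes "1 \<le> k" "ipt_alarm q fs cS cd \<omega> k"
  shows "ipt_time q fs cS cd \<omega> \<le> enat k"
proof -
  have ex: "\<exists>k\<ge>1. ipt_alarm q fs cS cd \<omega> k" using assms by blast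
  have "(LEAST k. 1 \<le> k \<and> ipt_alarm q fs cS cd \<omega> k) \<le> k" using assms by (intro Least_le) simp
  then show ?thesis using ex by (simp add: ipt_time_def)
qed

lemma G1_time:
  assumes "1 \<le> T" "real T \<le> K" "cS \<le> Qstat q \<omega> 1 T"
  shows "ipt_time q fs cS cd \<omega> \<le> enat T"
proof -
  have "ipt_alarm q fs cS cd \<omega> (1 + T - 1)"
    using assms by (intro G_alarm) auto
  then show ?thesis using assms(1) by (intro time_le) auto
qed

lemma E_time:
  assumes a: "1 \<le> a" and T: "1 \<le> T" "real T \<le> K"
    and G: "\<And>r. a \<le> r \<Longrightarrow> r \<le> a + T \<Longrightarrow> cS \<le> Qstat q \<omega> r (r + T - 1)"
  shows "ipt_time q fs cS cd \<omega> \<le> enat (a + 2 * T - 1)"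
proof -
  define k1 where "k1 = a + T - 1"
  define s where "s = tau \<omega> k1"
  have k1: "1 \<le> k1" using a T by (simp add: k1_def)
  have sk: "s \<le> k1" using tau_le[OF k1] by (simp add: s_def)
  show ?thesis
  proof (cases "s \<le> a")
    case True
    have "Qstat q \<omega> a k1 \<le> Sstat q \<omega> s k1"
      using imax_props[of s k1 q \<omega>] True T by (simp add: Sstat_def k1_def)
    moreover have "cS \<le> Qstat q \<omega> a k1" using G[of a] by (simp add: k1_def)
    ultimately have S: "cS \<le> Sstat q \<omega> s k1" by simp
    show ?thesis
    proof (cases "ipt_alarm q fs cS cd \<omega> k1")
      case True
      then have "ipt_time q fs cS cd \<omega> \<le> enat k1" using k1 by (intro time_le)
      then show ?thesis by (rule order_trans) (simp add: k1_def)
    next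
      case False
      then have "Dstat q fs \<omega> s k1 < ereal (cd (nstat q \<omega> s k1))"
        using S by (simp add: ipt_alarm_def Let_def s_def not_le)
      then have "tau \<omega> (Suc k1) = Suc k1" using S k1 by (simp add: Let_def s_def)
      moreover have "Suc k1 = a + T" using a T by (simp add: k1_def)
      ultimately have ts: "tau \<omega> (a + T) = a + T" by simp
      have "ipt_alarm q fs cS cd \<omega> (a + T + T - 1)"
        using G[of "a + T"] T a by (intro G_alarm[OF ts]) auto
      then have "ipt_time q fs cS cd \<omega> \<le> enat (a + T + T - 1)" using a T by (intro time_le) auto
      moreover have "a + T + T - 1 = a + 2 * T - 1" by simp
      ultimately show ?thesis by metis
    qed
  next
    case False
    have ts: "tau \<omega> s = s" using tau_fix by (simp add: s_def)
    have s1: "1 \<le> s" using tau_ge1 by (simp add: s_def)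
    have "ipt_alarm q fs cS cd \<omega> (s + T - 1)"
      using G[of s] False sk T by (intro G_alarm[OF ts s1]) (auto simp: k1_def)
    then have "ipt_time q fs cS cd \<omega> \<le> enat (s + T - 1)" using s1 T by (intro time_le) auto
    then show ?thesis by (rule order_trans) (use sk T in \<open>auto simp: k1_def\<close>)
  qed
qed

end



context
  fixes f1 :: "'a::finite \<Rightarrow> real"
  assumes f1: "f1 \<in> pmfs"
begin

definition "pp = embed_pmf f1"

lemma pmf_pp: "pmf pp a = f1 a"
  unfolding pp_def
proof (rule pmf_embed_pmf)
  show "0 \<le> f1 x" for x using f1 by (simp add: pmfs_def)
  have "(\<integral>\<^sup>+x. ennreal (f1 x) \<partial>count_space UNIV) = (\<Sum>x\<in>UNIV. ennreal (f1 x))"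
    by (simp add: nn_integral_count_space_finite)
  also have "\<dots> = ennreal (\<Sum>x\<in>UNIV. f1 x)" using f1 by (intro sum_ennreal) (simp add: pmfs_def)
  also have "\<dots> = 1" using f1 by (simp add: pmfs_def)
  finally show "(\<integral>\<^sup>+x. ennreal (f1 x) \<partial>count_space UNIV) = 1" .
qed

lemma law_eq: "obs_law f1 = PiM UNIV (\<lambda>_::nat. measure_pmf pp)"
  by (simp add: obs_law_def pp_def)

interpretation P: product_prob_space "\<lambda>_::nat. measure_pmf pp" UNIV
  by unfold_locales

lemma prob_law: "prob_space (obs_law f1)"
  unfolding law_eq by (rule P.prob_space_axioms)

lemma space_law: "space (obs_law f1) = UNIV"
  unfolding law_eq by (simp add: space_PiM)

lemma meas_coord: "measure (obs_law f1) {\<omega>. \<omega> t = a} = f1 a"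
proof -
  have "emeasure (obs_law f1) {\<omega>. \<omega> t = a} = emeasure (measure_pmf pp) {a}"
    using P.emeasure_PiM_Collect_single[of t "{a}"] unfolding law_eq by (simp add: space_PiM)
  then show ?thesis
    by (simp add: measure_def pmf_pp[symmetric] emeasure_pmf_single)
qed

lemma fin_dep_sets_gen:
  assumes "finite J"
  shows "{x\<in>space (PiM J (\<lambda>_. measure_pmf pp)). P x} \<in> sets (PiM J (\<lambda>_. measure_pmf pp))"
proof (rule sets.countable)
  fix x assume x: "x \<in> {x\<in>space (PiM J (\<lambda>_. measure_pmf pp)). P x}"
  then have "{x} = PiE J (\<lambda>i. {x i})" by (auto simp: space_PiM PiE_iff extensional_def fun_eq_iff) metis
  also have "\<dots> \<in> sets (PiM J (\<lambda>_. measure_pmf pp))"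
    using assms by (intro sets_PiM_I_countable) (auto intro: countable_finite)
  finally show "{x} \<in> sets (PiM J (\<lambda>_. measure_pmf pp))" .
next
  have "finite (space (PiM J (\<lambda>_. measure_pmf pp)))" using assms by (simp add: space_PiM finite_PiE)
  then show "countable {x\<in>space (PiM J (\<lambda>_. measure_pmf pp)). P x}" by (simp add: countable_finite)
qed

lemma restrict_meas: "(\<lambda>\<omega>. restrict \<omega> J) \<in> measurable (obs_law f1) (PiM J (\<lambda>_. measure_pmf pp))"
  unfolding law_eq by (intro measurable_restrict measurable_component_singleton) auto

lemma fin_dep_sets:
  assumes "finite J" and dep: "\<And>\<omega> \<omega>'. (\<And>t. t \<in> J \<Longrightarrow> \<omega> t = \<omega>' t) \<Longrightarrow> P \<omega> = P \<omega>'"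
  shows "{\<omega>. P \<omega>} \<in> sets (obs_law f1)"
proof -
  have e: "P (restrict \<omega> J) = P \<omega>" for \<omega> by (rule dep) simp
  have "{\<omega>. P \<omega>} = (\<lambda>\<omega>. restrict \<omega> J) -` {x\<in>space (PiM J (\<lambda>_. measure_pmf pp)). P x} \<inter> space (obs_law f1)"
    by (auto simp: space_law space_PiM e)
  also have "\<dots> \<in> sets (obs_law f1)"
    by (rule measurable_sets[OF restrict_meas fin_dep_sets_gen[OF assms(1)]])
  finally show ?thesis .
qed

lemma coord_indep: "prob_space.indep_vars (obs_law f1) (\<lambda>_. measure_pmf pp) (\<lambda>i \<omega>. \<omega> i) UNIV"
proof -
  interpret L: prob_space "obs_law f1" by (rule prob_law)
  have "distr (obs_law f1) (PiM UNIV (\<lambda>_. measure_pmf pp)) (\<lambda>x. \<lambda>i\<in>UNIV. x i) = PiM UNIV (\<lambda>_. measure_pmf pp)"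
  proof -
    have "(\<lambda>x::nat\<Rightarrow>'a. \<lambda>i\<in>UNIV. x i) = (\<lambda>x. x)" by (auto simp: restrict_def)
    then show ?thesis unfolding law_eq by (simp add: distr_id)
  qed
  moreover have "distr (obs_law f1) (measure_pmf pp) (\<lambda>\<omega>. \<omega> i) = measure_pmf pp" for i
    unfolding law_eq by (rule P.PiM_component) simp
  ultimately show ?thesis
    by (subst L.indep_vars_iff_distr_eq_PiM) (auto simp: law_eq)
qed

lemma sum_ind_card: "finite A \<Longrightarrow> (\<Sum>t\<in>A. if P t then 1 else 0 :: real) = real (card {t\<in>A. P t})"
  by (simp add: sum.inter_filter[symmetric])

lemma window_count:
  assumes T: "1 \<le> T" and e: "0 \<le> e"
  shows "measure (obs_law f1) {\<omega>. real T * e \<le> \<bar>real (card {t\<in>{r..<r+T}. \<omega> t = a}) - real T * f1 a\<bar>}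
           \<le> 2 * exp (-2 * real T * e\<^sup>2)"
proof -
  interpret L: prob_space "obs_law f1" by (rule prob_law)
  let ?X = "\<lambda>t \<omega>. if \<omega> t = a then 1 else (0::real)"
  have ind: "L.indep_vars (\<lambda>_. borel) ?X {r..<r+T}"
    by (rule L.indep_vars_compose2[OF L.indep_vars_subset[OF coord_indep]]) auto
  have ex: "L.expectation (?X t) = f1 a" for t
  proof -
    have "?X t = indicator {\<omega>. \<omega> t = a}" by (auto simp: fun_eq_iff)
    then show ?thesis by (simp add: space_law meas_coord)
  qed
  interpret H: Hoeffding_ineq "obs_law f1" "{r..<r+T}" ?X "\<lambda>_. 0" "\<lambda>_. 1" "real T * f1 a"
    by unfold_locales (auto simp: ind ex)
  have "L.prob {x\<in>space (obs_law f1). \<bar>(\<Sum>i\<in>{r..<r+T}. ?X i x) - real T * f1 a\<bar> \<ge> real T * e}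
         \<le> 2 * exp (-2 * (real T * e)\<^sup>2 / (\<Sum>i\<in>{r..<r+T}. (1 - 0)\<^sup>2))"
    using T e by (intro H.Hoeffding_ineq_abs_ge) auto
  also have "-2 * (real T * e)\<^sup>2 / (\<Sum>i\<in>{r..<r+T}. (1 - 0)\<^sup>2) = -2 * real T * e\<^sup>2"
    using T by (simp add: power2_eq_square field_simps)
  also have "{x\<in>space (obs_law f1). \<bar>(\<Sum>i\<in>{r..<r+T}. ?X i x) - real T * f1 a\<bar> \<ge> real T * e}
      = {\<omega>. real T * e \<le> \<bar>real (card {t\<in>{r..<r+T}. \<omega> t = a}) - real T * f1 a\<bar>}"
    by (simp add: space_law sum_ind_card)
  finally show ?thesis .
qed

lemma window_bad:
  assumes T: "1 \<le> T" and e: "0 \<le> e"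
  shows "measure (obs_law f1) {\<omega>. \<exists>a. real T * e \<le> \<bar>real (card {t\<in>{r..<r+T}. \<omega> t = a}) - real T * f1 a\<bar>}
           \<le> 2 * real CARD('a) * exp (-2 * real T * e\<^sup>2)"
proof -
  have "{\<omega>. \<exists>a. real T * e \<le> \<bar>real (card {t\<in>{r..<r+T}. \<omega> t = a}) - real T * f1 a\<bar>}
     = (\<Union>a\<in>UNIV. {\<omega>. real T * e \<le> \<bar>real (card {t\<in>{r..<r+T}. \<omega> t = a}) - real T * f1 a\<bar>})" by auto
  also have "measure (obs_law f1) \<dots> \<le> (\<Sum>a\<in>UNIV. measure (obs_law f1) {\<omega>. real T * e \<le> \<bar>real (card {t\<in>{r..<r+T}. \<omega> t = a}) - real T * f1 a\<bar>})"
  proof (rule measure_UNION_le)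
    fix a :: 'a
    show "{\<omega>. real T * e \<le> \<bar>real (card {t\<in>{r..<r+T}. \<omega> t = a}) - real T * f1 a\<bar>} \<in> sets (obs_law f1)"
    proof (rule fin_dep_sets[of "{r..<r+T}"])
      fix \<omega> \<omega>' :: "nat \<Rightarrow> 'a" assume h: "\<And>t. t \<in> {r..<r+T} \<Longrightarrow> \<omega> t = \<omega>' t"
      have "{t\<in>{r..<r+T}. \<omega> t = a} = {t\<in>{r..<r+T}. \<omega>' t = a}" using h by auto
      then show "(real T * e \<le> \<bar>real (card {t\<in>{r..<r+T}. \<omega> t = a}) - real T * f1 a\<bar>) =
                 (real T * e \<le> \<bar>real (card {t\<in>{r..<r+T}. \<omega>' t = a}) - real T * f1 a\<bar>)" by simp
    qed simp
  qed simp
  also have "\<dots> \<le> (\<Sum>a\<in>(UNIV::'a set). 2 * exp (-2 * real T * e\<^sup>2))"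
    by (intro sum_mono window_count T e)
  also have "\<dots> = 2 * real CARD('a) * exp (-2 * real T * e\<^sup>2)" by simp
  finally show ?thesis .
qed

lemma indep_blocks:
  fixes K :: "nat \<Rightarrow> nat set" and n :: nat
  assumes disj: "disjoint_family K" and fin: "\<And>j. finite (K j)"
    and dep: "\<And>j \<omega> \<omega>'. (\<And>t. t \<in> K j \<Longrightarrow> \<omega> t = \<omega>' t) \<Longrightarrow> P j \<omega> = P j \<omega>'"
  shows "measure (obs_law f1) (\<Inter>j\<in>{..n}. {\<omega>. P j \<omega>}) = (\<Prod>j\<in>{..n}. measure (obs_law f1) {\<omega>. P j \<omega>})"
proof -
  interpret L: prob_space "obs_law f1" by (rule prob_law)
  have iv: "L.indep_vars (\<lambda>j. PiM (K j) (\<lambda>_. measure_pmf pp)) (\<lambda>j \<omega>. restrict (\<lambda>i. \<omega> i) (K j)) UNIV"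
    by (rule L.indep_vars_restrict[OF coord_indep]) (use disj in \<open>auto simp: disjoint_family_on_def\<close>)
  have ie: "L.indep_events (\<lambda>j. {x\<in>space (obs_law f1). P j (restrict (\<lambda>i. x i) (K j))}) UNIV"
    by (rule L.indep_eventsI_indep_vars[OF iv]) (rule fin_dep_sets_gen[OF fin])
  have e: "P j (restrict (\<lambda>i. x i) (K j)) = P j x" for j x by (rule dep) simp
  have ie2: "L.indep_events (\<lambda>j. {\<omega>. P j \<omega>}) UNIV"
    using ie by (simp add: e space_law)
  then have "\<forall>J\<subseteq>UNIV. J \<noteq> {} \<longrightarrow> finite J \<longrightarrow> L.prob (\<Inter>j\<in>J. {\<omega>. P j \<omega>}) = (\<Prod>j\<in>J. L.prob {\<omega>. P j \<omega>})"
    unfolding L.indep_events_def by blast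
  then have "{..n} \<noteq> {} \<longrightarrow> finite {..n} \<longrightarrow> L.prob (\<Inter>j\<in>{..n}. {\<omega>. P j \<omega>}) = (\<Prod>j\<in>{..n}. L.prob {\<omega>. P j \<omega>})"
    by blast
  moreover have "{..n} \<noteq> {}" by auto
  moreover have "finite {..n}" by simp
  ultimately show ?thesis by blast
qed

end


lemma emp_cong: "(\<And>t. t \<in> {i..j} \<Longrightarrow> \<omega> t = \<omega>' t) \<Longrightarrow> emp \<omega> i j = emp \<omega>' i j"
proof -
  assume h: "\<And>t. t \<in> {i..j} \<Longrightarrow> \<omega> t = \<omega>' t"
  have "{t\<in>{i..j}. \<omega> t = a} = {t\<in>{i..j}. \<omega>' t = a}" for a using h by auto
  then show ?thesis unfolding emp_def by (simp add: fun_eq_iff)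
qed

lemma Qstat_cong: "(\<And>t. t \<in> {i..j} \<Longrightarrow> \<omega> t = \<omega>' t) \<Longrightarrow> Qstat q \<omega> i j = Qstat q \<omega>' i j"
proof -
  assume h: "\<And>t. t \<in> {i..j} \<Longrightarrow> \<omega> t = \<omega>' t"
  have "emp \<omega> i j = emp \<omega>' i j" by (rule emp_cong) (rule h)
  then show ?thesis by (simp add: Qstat_def)
qed

context
  fixes q :: "('a::finite \<Rightarrow> real) \<Rightarrow> real" and f0 f1 :: "'a \<Rightarrow> real" and cS K e :: real
    and fs :: "nat \<Rightarrow> 'a \<Rightarrow> real" and cd :: "nat \<Rightarrow> real" and T :: nat
  assumes cS_pos: "0 < cS"
    and fs: "\<And>n. 1 \<le> n \<Longrightarrow> (\<exists>f\<in>pmfs. cS / real n \<le> q f) \<Longrightarrow> is_fstar q f0 cS n (fs n)"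
    and cd0: "\<And>n. real n \<le> K \<Longrightarrow> cd n = 0"
    and f1: "f1 \<in> pmfs"
    and T1: "1 \<le> T" and TK: "real T \<le> K" and e: "0 < e"
    and close: "\<And>g. g \<in> pmfs \<Longrightarrow> (\<And>a. \<bar>g a - f1 a\<bar> < e) \<Longrightarrow> cS \<le> real T * q g"
begin

lemma Gbad_sets: "{\<omega>. Qstat q \<omega> r (r+T-1) < cS} \<in> sets (obs_law f1)"
proof (rule fin_dep_sets[OF f1, of "{r..r+T-1}"])
  fix \<omega> \<omega>' :: "nat \<Rightarrow> 'a" assume h: "\<And>t. t \<in> {r..r+T-1} \<Longrightarrow> \<omega> t = \<omega>' t"
  have "Qstat q \<omega> r (r+T-1) = Qstat q \<omega>' r (r+T-1)" by (rule Qstat_cong) (rule h)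
  then show "(Qstat q \<omega> r (r+T-1) < cS) = (Qstat q \<omega>' r (r+T-1) < cS)" by simp
qed simp

lemma Gbad_prob: "measure (obs_law f1) {\<omega>. Qstat q \<omega> r (r+T-1) < cS} \<le> 2 * real CARD('a) * exp (-2 * real T * e\<^sup>2)"
proof -
  interpret L: prob_space "obs_law f1" by (rule prob_law[OF f1])
  let ?B = "{\<omega>. \<exists>a. real T * e \<le> \<bar>real (card {t\<in>{r..<r+T}. \<omega> t = a}) - real T * f1 a\<bar>}"
  have sub: "{\<omega>. Qstat q \<omega> r (r+T-1) < cS} \<subseteq> ?B"
  proof (rule subsetI, rule ccontr)
    fix \<omega> assume w1: "\<omega> \<in> {\<omega>. Qstat q \<omega> r (r+T-1) < cS}" and w2: "\<omega> \<notin> ?B"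
    then have h: "\<bar>real (card {t\<in>{r..<r+T}. \<omega> t = a}) - real T * f1 a\<bar> < real T * e" for a
      by (auto simp: not_le)
    have eq: "{r..r+T-1} = {r..<r+T}" using T1 by auto
    have sT: "Suc (r + T - 1) - r = T" using T1 by simp
    have Tp: "real T > 0" using T1 by simp
    have emp_eq: "emp \<omega> r (r+T-1) a = real (card {t\<in>{r..<r+T}. \<omega> t = a}) / real T" for a
      unfolding emp_def eq sT by (rule refl)
    have cl: "\<bar>emp \<omega> r (r+T-1) a - f1 a\<bar> < e" for a
    proof -
      have d: "emp \<omega> r (r+T-1) a - f1 a = (real (card {t\<in>{r..<r+T}. \<omega> t = a}) - real T * f1 a) / real T"
        unfolding emp_eq using Tp by (simp add: field_simps)
      have "\<bar>emp \<omega> r (r+T-1) a - f1 a\<bar> = \<bar>real (card {t\<in>{r..<r+T}. \<omega> t = a}) - real T * f1 a\<bar> / real T"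
        unfolding d using Tp by (simp add: abs_divide)
      also have "\<dots> < e" using h[of a] Tp by (simp add: field_simps)
      finally show ?thesis .
    qed
    have "emp \<omega> r (r+T-1) \<in> pmfs" using T1 by (intro emp_pmf) simp
    then have "cS \<le> real T * q (emp \<omega> r (r+T-1))" using cl by (intro close)
    moreover have "Qstat q \<omega> r (r+T-1) = real T * q (emp \<omega> r (r+T-1))"
      using T1 by (simp add: Qstat_def sT)
    ultimately show False using w1 by simp
  qed
  have Bs: "?B \<in> sets (obs_law f1)"
  proof (rule fin_dep_sets[OF f1, of "{r..<r+T}"])
    fix \<omega> \<omega>' :: "nat \<Rightarrow> 'a" assume h: "\<And>t. t \<in> {r..<r+T} \<Longrightarrow> \<omega> t = \<omega>' t"
    have "{t\<in>{r..<r+T}. \<omega> t = a} = {t\<in>{r..<r+T}. \<omega>' t = a}" for a using h by auto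
    then show "(\<exists>a. real T * e \<le> \<bar>real (card {t\<in>{r..<r+T}. \<omega> t = a}) - real T * f1 a\<bar>) =
               (\<exists>a. real T * e \<le> \<bar>real (card {t\<in>{r..<r+T}. \<omega>' t = a}) - real T * f1 a\<bar>)" by simp
  qed simp
  have "measure (obs_law f1) {\<omega>. Qstat q \<omega> r (r+T-1) < cS} \<le> measure (obs_law f1) ?B"
    by (rule L.finite_measure_mono[OF sub Bs])
  also have "\<dots> \<le> 2 * real CARD('a) * exp (-2 * real T * e\<^sup>2)"
    using window_bad[OF f1 T1, of e r] e by simp
  finally show ?thesis .
qed

lemma Ebad_sets: "{\<omega>. \<exists>r\<in>{a..a+T}. Qstat q \<omega> r (r+T-1) < cS} \<in> sets (obs_law f1)"
proof -
  have "{\<omega>. \<exists>r\<in>{a..a+T}. Qstat q \<omega> r (r+T-1) < cS} = (\<Union>r\<in>{a..a+T}. {\<omega>. Qstat q \<omega> r (r+T-1) < cS})"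
    by auto
  also have "\<dots> \<in> sets (obs_law f1)" by (intro sets.finite_UN Gbad_sets) auto
  finally show ?thesis .
qed

lemma Ebad_prob: "measure (obs_law f1) {\<omega>. \<exists>r\<in>{a..a+T}. Qstat q \<omega> r (r+T-1) < cS}
   \<le> real (T + 1) * (2 * real CARD('a) * exp (-2 * real T * e\<^sup>2))"
proof -
  have "{\<omega>. \<exists>r\<in>{a..a+T}. Qstat q \<omega> r (r+T-1) < cS} = (\<Union>r\<in>{a..a+T}. {\<omega>. Qstat q \<omega> r (r+T-1) < cS})"
    by auto
  also have "measure (obs_law f1) \<dots> \<le> (\<Sum>r\<in>{a..a+T}. measure (obs_law f1) {\<omega>. Qstat q \<omega> r (r+T-1) < cS})"
    by (intro measure_UNION_le Gbad_sets) auto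
  also have "\<dots> \<le> (\<Sum>r\<in>{a..a+T}. 2 * real CARD('a) * exp (-2 * real T * e\<^sup>2))"
    by (intro sum_mono Gbad_prob)
  also have "\<dots> = real (T + 1) * (2 * real CARD('a) * exp (-2 * real T * e\<^sup>2))" by simp
  finally show ?thesis .
qed

lemma exp_bound:
  assumes eta: "real (T + 1) * (2 * real CARD('a) * exp (-2 * real T * e\<^sup>2)) < 1"
  shows "(\<integral>\<^sup>+\<omega>. ennreal_of_enat (ipt_time q fs cS cd \<omega>) \<partial>obs_law f1)
         \<le> ennreal (real T + real (2*(2*T+1)) * (2 * real CARD('a) * exp (-2 * real T * e\<^sup>2))
                     / (1 - real (T + 1) * (2 * real CARD('a) * exp (-2 * real T * e\<^sup>2))))"
proof -
  interpret L: prob_space "obs_law f1" by (rule prob_law[OF f1])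
  define b where "b = 2 * real CARD('a) * exp (-2 * real T * e\<^sup>2)"
  define \<eta> where "\<eta> = real (T+1) * b"
  have b0: "0 \<le> b" by (simp add: b_def)
  have \<eta>0: "0 \<le> \<eta>" "\<eta> < 1" using eta b0 by (auto simp: \<eta>_def b_def)
  define W where "W = 2*T+1"
  define P where "P j \<omega> = (if j = 0 then Qstat q \<omega> 1 (1+T-1) < cS
            else (\<exists>r\<in>{1+j*W..1+j*W+T}. Qstat q \<omega> r (r+T-1) < cS))" for j \<omega>
  define A where "A j = {\<omega>. P j \<omega>}" for j
  define Kb where "Kb j = {1+j*W..<1+(j+1)*W}" for j
  define C where "C j = (\<Inter>i\<in>{..j}. A i)" for j
  have Asets: "A j \<in> sets (obs_law f1)" for j
    using Gbad_sets[of 1] Ebad_sets[of "1+j*W"] by (cases "j=0") (auto simp: A_def P_def)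
  have Csets: "C j \<in> sets (obs_law f1)" for j
    unfolding C_def by (intro sets.finite_INT Asets) auto
  have Aprob: "measure (obs_law f1) (A j) \<le> (if j = 0 then b else \<eta>)" for j
    using Gbad_prob[of 1] Ebad_prob[of "1+j*W"] by (cases "j=0") (auto simp: A_def P_def b_def \<eta>_def)
  have disj: "disjoint_family Kb"
    unfolding disjoint_family_on_def
  proof (intro ballI impI)
    fix i j :: nat assume ij: "i \<noteq> j"
    show "Kb i \<inter> Kb j = {}"
    proof (rule ccontr)
      assume "Kb i \<inter> Kb j \<noteq> {}" then obtain t where t: "t \<in> Kb i" "t \<in> Kb j" by blast
      consider "i < j" | "j < i" using ij by linarith
      then show False
      proof cases
        case 1 then have "(i+1)*W \<le> j*W" by (intro mult_le_mono1) simp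
        then show False using t by (simp add: Kb_def)
      next
        case 2 then have "(j+1)*W \<le> i*W" by (intro mult_le_mono1) simp
        then show False using t by (simp add: Kb_def)
      qed
    qed
  qed
  have dep: "P j \<omega> = P j \<omega>'" if h: "\<And>t. t \<in> Kb j \<Longrightarrow> \<omega> t = \<omega>' t" for j \<omega> \<omega>'
  proof (cases "j = 0")
    case True
    have "Qstat q \<omega> 1 (1+T-1) = Qstat q \<omega>' 1 (1+T-1)"
      by (rule Qstat_cong) (rule h, use True in \<open>auto simp: Kb_def W_def\<close>)
    then show ?thesis using True by (simp add: P_def)
  next
    case False
    have "Qstat q \<omega> r (r+T-1) = Qstat q \<omega>' r (r+T-1)" if "r \<in> {1+j*W..1+j*W+T}" for r
      by (rule Qstat_cong) (rule h, use that in \<open>auto simp: Kb_def W_def\<close>)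
    then show ?thesis using False unfolding P_def by auto
  qed
  have Cprob_eq: "measure (obs_law f1) (C j) = (\<Prod>i\<in>{..j}. measure (obs_law f1) (A i))" for j
    unfolding C_def A_def by (rule indep_blocks[OF f1 disj _ dep]) (simp add: Kb_def)
  have Cprob: "measure (obs_law f1) (C j) \<le> b * \<eta> ^ j" for j
  proof -
    have "(\<Prod>i\<in>{..j}. measure (obs_law f1) (A i)) \<le> b * \<eta> ^ j"
    proof (induction j)
      case 0 then show ?case using Aprob[of 0] by simp
    next
      case (Suc j)
      have "(\<Prod>i\<in>{..Suc j}. measure (obs_law f1) (A i)) = (\<Prod>i\<in>{..j}. measure (obs_law f1) (A i)) * measure (obs_law f1) (A (Suc j))"
        by (simp add: atMost_Suc mult.commute)
      also have "\<dots> \<le> (b * \<eta> ^ j) * \<eta>"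
        using Suc.IH Aprob[of "Suc j"] b0 \<eta>0 by (intro mult_mono) (auto intro: prod_nonneg)
      finally show ?case by (simp add: mult_ac)
    qed
    then show ?thesis by (simp add: Cprob_eq)
  qed
  define W2 where "W2 = 2 * W"
  have W1: "1 \<le> W2" by (simp add: W2_def W_def)
  have pw: "ennreal_of_enat (ipt_time q fs cS cd \<omega>) \<le> of_nat T + of_nat W2 * (\<Sum>j. indicator (C j) \<omega>)" for \<omega>
  proof (cases "\<omega> \<in> A 0")
    case False
    then have QQ: "cS \<le> Qstat q \<omega> 1 T" by (simp add: A_def P_def)
    note g1 = G1_time[OF cS_pos fs cd0 T1 TK]
    have "ipt_time q fs cS cd \<omega> \<le> enat T" by (rule g1) (use QQ in simp_all)
    then have "ennreal_of_enat (ipt_time q fs cS cd \<omega>) \<le> of_nat T"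
      by (metis ennreal_of_enat_enat ennreal_of_enat_le_iff)
    also have "(of_nat T :: ennreal) \<le> of_nat T + of_nat W2 * (\<Sum>j. indicator (C j) \<omega>)" by simp
    finally show ?thesis .
  next
    case A0: True
    show ?thesis
    proof (cases "\<exists>j. \<omega> \<notin> A (Suc j)")
      case True
      define j0 where "j0 = (LEAST j. \<omega> \<notin> A (Suc j))"
      have nj0: "\<omega> \<notin> A (Suc j0)" using True unfolding j0_def by (rule LeastI_ex)
      have inA: "\<omega> \<in> A k" if "k \<le> j0" for k
      proof (cases k)
        case 0 then show ?thesis using A0 by simp
      next
        case (Suc k')
        then have "k' < j0" using that by simp
        then show ?thesis using not_less_Least[of k' "\<lambda>j. \<omega> \<notin> A (Suc j)"] Suc by (simp add: j0_def)
      qed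
      have inC: "\<omega> \<in> C i" if "i \<le> j0" for i using inA that by (auto simp: C_def)
      have "(of_nat (Suc j0) :: ennreal) = (\<Sum>j<Suc j0. indicator (C j) \<omega>)"
        using inC by simp
      also have "\<dots> \<le> (\<Sum>j. indicator (C j) \<omega>)" by (intro sum_le_suminf summableI) auto
      finally have cnt: "(of_nat (Suc j0) :: ennreal) \<le> (\<Sum>j. indicator (C j) \<omega>)" .
      define a where "a = 1 + Suc j0 * W"
      have G: "cS \<le> Qstat q \<omega> r (r + T - 1)" if "a \<le> r" "r \<le> a + T" for r
        using nj0 that by (auto simp: A_def P_def a_def not_less)
      have "ipt_time q fs cS cd \<omega> \<le> enat (a + 2 * T - 1)"
        by (rule E_time[OF cS_pos fs cd0 _ T1 TK G]) (simp_all add: a_def)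
      then have "ennreal_of_enat (ipt_time q fs cS cd \<omega>) \<le> of_nat (a + 2 * T - 1)"
        by (metis ennreal_of_enat_enat ennreal_of_enat_le_iff)
      also have "(of_nat (a + 2 * T - 1) :: ennreal) \<le> of_nat (T + W2 * Suc j0)"
      proof (intro of_nat_mono)
        have "T \<le> W * Suc j0" by (simp add: W_def)
        then show "a + 2 * T - 1 \<le> T + W2 * Suc j0" by (simp add: a_def W2_def W_def)
      qed
      also have "(of_nat (T + W2 * Suc j0) :: ennreal) = of_nat T + of_nat W2 * of_nat (Suc j0)"
        by (simp only: of_nat_add of_nat_mult)
      also have "\<dots> \<le> of_nat T + of_nat W2 * (\<Sum>j. indicator (C j) \<omega>)"
        by (intro add_left_mono mult_left_mono cnt) simp
      finally show ?thesis .
    next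
      case False
      then have "\<omega> \<in> C j" for j using A0 by (auto simp: C_def) (metis not0_implies_Suc)
      then have "(\<Sum>j. indicator (C j) \<omega> :: ennreal) = (\<Sum>j. ennreal 1)" by simp
      also have "\<dots> = top" by (rule summable_iff_suminf_neq_top) (auto simp: summable_const_iff)
      finally show ?thesis using W1 by (simp add: ennreal_mult_top)
    qed
  qed
  have "(\<integral>\<^sup>+\<omega>. ennreal_of_enat (ipt_time q fs cS cd \<omega>) \<partial>obs_law f1)
        \<le> (\<integral>\<^sup>+\<omega>. of_nat T + of_nat W2 * (\<Sum>j. indicator (C j) \<omega>) \<partial>obs_law f1)"
    by (intro nn_integral_mono pw)
  also have "\<dots> = (\<integral>\<^sup>+\<omega>. of_nat T \<partial>obs_law f1) + (\<integral>\<^sup>+\<omega>. of_nat W2 * (\<Sum>j. indicator (C j) \<omega>) \<partial>obs_law f1)"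
    using Csets by (intro nn_integral_add) auto
  also have "(\<integral>\<^sup>+\<omega>. of_nat T \<partial>obs_law f1) = of_nat T"
    by (simp add: L.emeasure_space_1)
  also have "(\<integral>\<^sup>+\<omega>. of_nat W2 * (\<Sum>j. indicator (C j) \<omega>) \<partial>obs_law f1)
           = of_nat W2 * (\<Sum>j. emeasure (obs_law f1) (C j))"
    using Csets by (simp add: nn_integral_cmult nn_integral_suminf)
  also have "(\<Sum>j. emeasure (obs_law f1) (C j)) \<le> (\<Sum>j. ennreal (b * \<eta> ^ j))"
    using Cprob by (intro suminf_le summableI) (auto simp: L.emeasure_eq_measure intro: ennreal_leI)
  also have "(\<Sum>j. ennreal (b * \<eta> ^ j)) = ennreal (\<Sum>j. b * \<eta> ^ j)"
    using b0 \<eta>0 by (intro suminf_ennreal2 summable_mult summable_geometric) auto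
  also have "(\<Sum>j. b * \<eta> ^ j) = b / (1 - \<eta>)"
    using \<eta>0 by (simp add: suminf_mult suminf_geometric summable_geometric)
  finally have "(\<integral>\<^sup>+\<omega>. ennreal_of_enat (ipt_time q fs cS cd \<omega>) \<partial>obs_law f1)
       \<le> of_nat T + of_nat W2 * ennreal (b / (1 - \<eta>))" by (simp add: mult_left_mono add_left_mono)
  also have "\<dots> = ennreal (real T) + ennreal (real W2) * ennreal (b / (1 - \<eta>))"
    by (simp only: ennreal_of_nat_eq_real_of_nat)
  also have "\<dots> = ennreal (real T + real W2 * (b / (1 - \<eta>)))"
  proof -
    have x0: "0 \<le> b / (1 - \<eta>)" using b0 \<eta>0 by simp
    have "ennreal (real T + real W2 * (b / (1 - \<eta>))) = ennreal (real T) + ennreal (real W2 * (b / (1 - \<eta>)))"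
      using x0 by (intro ennreal_plus) (auto simp del: times_divide_eq_right)
    also have "ennreal (real W2 * (b / (1 - \<eta>))) = ennreal (real W2) * ennreal (b / (1 - \<eta>))"
      using x0 by (intro ennreal_mult) auto
    finally show ?thesis by simp
  qed
  finally show ?thesis by (simp add: b_def \<eta>_def W2_def W_def)
qed

end


lemma final_real:
  fixes T q1 cS \<epsilon> \<theta> c \<beta> \<eta> :: real
  assumes q1: "0 < q1" and \<epsilon>: "0 < \<epsilon>" and th: "0 < \<theta>" "\<theta> \<le> 1/2" "\<theta> \<le> \<epsilon> * q1 / 4"
    and c: "c = q1 * (1 - \<theta>)" and T: "1 \<le> T" "T \<le> cS / c + 1" and cS: "1 \<le> cS" "4 / \<epsilon> \<le> cS"
    and b: "0 \<le> \<beta>" "\<beta> \<le> \<eta>" "\<eta> \<le> 1/2" "\<beta> \<le> \<epsilon> / (48 * (1 / c + 1))"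
  shows "(T + 2 * (2 * T + 1) * \<beta> / (1 - \<eta>)) / cS \<le> 1 / q1 + \<epsilon>"
proof -
  have cp: "0 < c" using c q1 th by simp
  have cSp: "0 < cS" using cS by simp
  have "1 / c \<le> (1 + 2 * \<theta>) / q1"
  proof -
    have "1 \<le> (1 + 2 * \<theta>) * (1 - \<theta>)" using th by (simp add: algebra_simps power2_eq_square)
    then have "q1 * 1 \<le> q1 * ((1 + 2 * \<theta>) * (1 - \<theta>))" using q1 by (intro mult_left_mono) auto
    then have "q1 \<le> c + \<theta> * (c * 2)" unfolding c by (simp add: algebra_simps)
    then show ?thesis using q1 cp by (simp add: field_simps)
  qed
  also have "\<dots> \<le> 1 / q1 + \<epsilon> / 2" using th q1 by (simp add: field_simps)
  finally have c1: "1 / c \<le> 1 / q1 + \<epsilon> / 2" .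
  have TcS: "T / cS \<le> 1 / c + 1 / cS" using T cSp cp by (simp add: field_simps)
  have TcS2: "T / cS \<le> 1 / c + 1"
    using TcS cS by (smt (verit) divide_le_eq_1_pos cSp)
  have ce: "1 / cS \<le> \<epsilon> / 4" using cS \<epsilon> cSp by (simp add: field_simps)
  have eta1: "1 / (1 - \<eta>) \<le> 2" using b by (simp add: field_simps)
  have "2 * (2 * T + 1) * \<beta> / (1 - \<eta>) \<le> 2 * (3 * T) * \<beta> * 2"
  proof -
    have "2 * (2 * T + 1) * \<beta> / (1 - \<eta>) = (2 * (2 * T + 1) * \<beta>) * (1 / (1 - \<eta>))" by simp
    also have "\<dots> \<le> (2 * (3 * T) * \<beta>) * 2"
      using T b eta1 by (intro mult_mono) (auto intro!: mult_right_mono)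
    finally show ?thesis .
  qed
  then have "(T + 2 * (2 * T + 1) * \<beta> / (1 - \<eta>)) / cS \<le> (T + 12 * T * \<beta>) / cS"
    using cSp by (intro divide_right_mono) auto
  also have "\<dots> = T / cS + 12 * (T / cS) * \<beta>" by (simp add: add_divide_distrib)
  also have "12 * (T / cS) * \<beta> \<le> 12 * (1 / c + 1) * (\<epsilon> / (48 * (1 / c + 1)))"
    using TcS2 b T cSp cp by (intro mult_mono) auto
  also have "12 * (1 / c + 1) * (\<epsilon> / (48 * (1 / c + 1))) = \<epsilon> / 4"
  proof -
    have g: "12 * u * (\<epsilon> / (48 * u)) = \<epsilon> / 4" if "u \<noteq> 0" for u :: real using that by (simp add: field_simps)
    have "1 / c + 1 \<noteq> 0" using cp by (smt (verit) divide_pos_pos)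
    then show ?thesis by (rule g)
  qed
  finally show ?thesis using TcS c1 ce by linarith
qed

lemma exp_neg_bound:
  fixes x :: real assumes "0 < x" shows "exp (- x) \<le> 4 / x\<^sup>2"
proof -
  have h: "x / 2 \<le> exp (x / 2)" using exp_ge_add_one_self[of "x/2"] by linarith
  have "(x / 2) * (x / 2) \<le> exp (x / 2) * exp (x / 2)"
    using h assms by (intro mult_mono) auto
  also have "\<dots> = exp x" by (simp flip: exp_add)
  finally have "x\<^sup>2 / 4 \<le> exp x" by (simp add: power2_eq_square)
  then have "x\<^sup>2 * exp (-x) / 4 \<le> 1" by (simp add: exp_minus field_simps)
  then show ?thesis using assms by (simp add: field_simps)
qed

theorem lemma3:
  fixes q :: "('a::finite \<Rightarrow> real) \<Rightarrow> real"
    and L qbar rho :: real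
    and f0 f1 :: "'a \<Rightarrow> real"
    and P1 :: "('a \<Rightarrow> real) set"
    and fstar :: "real \<Rightarrow> nat \<Rightarrow> 'a \<Rightarrow> real"
    and cD :: "real \<Rightarrow> nat \<Rightarrow> real"
  assumes qc: "quasiconcave_on_pmfs q"
    and lip: "lipschitz_l1_on_pmfs L q"
    and f0: "f0 \<in> pmfs"
    and q0: "q f0 < 0" and qbar: "0 < qbar"
    and P1ne: "P1 \<noteq> {}"
    and P1sub: "P1 \<subseteq> {f\<in>pmfs. qbar \<le> q f}"
    and fstar: "\<And>cS n. 0 < cS \<Longrightarrow> 1 \<le> n \<Longrightarrow> (\<exists>f\<in>pmfs. cS / real n \<le> q f) \<Longrightarrow>
                   is_fstar q f0 cS n (fstar cS n)"
    and rho: "0 < rho"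
    and cD_nonneg: "\<And>cS n. 0 < cS \<Longrightarrow> 0 \<le> cD cS n"
    and cD_zero: "\<And>cS n. 0 < cS \<Longrightarrow> real n \<le> (1 + rho) * cS / qbar \<Longrightarrow> cD cS n = 0"
    and f1: "f1 \<in> P1"
  shows "Limsup at_top (\<lambda>cS::real.
            (\<integral>\<^sup>+ \<omega>. ennreal_of_enat (ipt_time q (fstar cS) cS (cD cS) \<omega>) \<partial>obs_law f1)
              / ennreal cS)
         \<le> ennreal (1 / q f1)"
proof -
  define q1 where "q1 = q f1"
  have f1p: "f1 \<in> pmfs" and q1b: "qbar \<le> q1" using P1sub f1 by (auto simp: q1_def)
  have q1p: "0 < q1" using qbar q1b by simp
  define m where "m = real CARD('a)"
  have m1: "1 \<le> m" unfolding m_def using finite_UNIV_card_ge_0[of] by (simp add: Suc_le_eq)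
  define Lc where "Lc = \<bar>L\<bar>"
  have Lc0: "0 \<le> Lc" by (simp add: Lc_def)
  let ?F = "\<lambda>cS::real. (\<integral>\<^sup>+ \<omega>. ennreal_of_enat (ipt_time q (fstar cS) cS (cD cS) \<omega>) \<partial>obs_law f1) / ennreal cS"
  have main: "\<forall>\<^sub>F cS in at_top. ?F cS \<le> ennreal (1 / q1 + \<epsilon>)" if \<epsilon>: "0 < \<epsilon>" for \<epsilon>
  proof -
    define \<theta> where "\<theta> = min (1/2) (min (\<epsilon> * q1 / 4) (rho / 4))"
    have th: "0 < \<theta>" "\<theta> \<le> 1/2" "\<theta> \<le> \<epsilon> * q1 / 4" "\<theta> \<le> rho / 4"
      using \<epsilon> q1p rho by (auto simp: \<theta>_def)
    define c where "c = q1 * (1 - \<theta>)"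
    have cp: "0 < c" using q1p th by (simp add: c_def)
    define e where "e = q1 * \<theta> / (Lc * m + 1)"
    have "0 < Lc * m + 1" using Lc0 m1 by (smt (verit) mult_nonneg_nonneg)
    then have ep: "0 < e" using q1p th unfolding e_def by (intro divide_pos_pos mult_pos_pos) auto
    define k where "k = 2 * e\<^sup>2"
    have kp: "0 < k" using ep by (simp add: k_def)
    define D where "D = 16 * m / k\<^sup>2"
    have Dp: "0 < D" using kp m1 by (simp add: D_def)
    define C0 where "C0 = max 1 (max (2 * qbar / rho) (max (4 / \<epsilon>) (max (2 * D * c) (D * c * (48 * (1 / c + 1)) / \<epsilon>))))"
    have closeq: "c \<le> q g" if g: "g \<in> pmfs" "\<And>a. \<bar>g a - f1 a\<bar> < e" for g
    proof -
      have "l1dist g f1 \<le> (\<Sum>a\<in>(UNIV::'a set). e)"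
        unfolding l1dist_def using g(2) by (intro sum_mono) (simp add: less_imp_le)
      also have "\<dots> = m * e" by (simp add: m_def)
      finally have l1: "l1dist g f1 \<le> m * e" .
      have "\<bar>q g - q f1\<bar> \<le> L * l1dist g f1" using lip g(1) f1p by (simp add: lipschitz_l1_on_pmfs_def)
      also have "\<dots> \<le> Lc * l1dist g f1"
      proof (rule mult_right_mono)
        show "0 \<le> l1dist g f1" unfolding l1dist_def by (intro sum_nonneg) simp
      qed (simp add: Lc_def)
      also have "\<dots> \<le> Lc * (m * e)" using l1 Lc0 by (intro mult_left_mono) auto
      also have "\<dots> = q1 * \<theta> * (Lc * m / (Lc * m + 1))" using Lc0 m1 by (simp add: e_def field_simps)
      also have "\<dots> \<le> q1 * \<theta> * 1"
      proof (intro mult_left_mono)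
        have "0 \<le> Lc * m" using Lc0 m1 by simp
        then show "Lc * m / (Lc * m + 1) \<le> 1" by (simp add: divide_le_eq_1)
      qed (use q1p th in auto)
      finally have "\<bar>q g - q1\<bar> \<le> q1 * \<theta>" by (simp add: q1_def)
      then show ?thesis by (simp add: c_def algebra_simps)
    qed
    show ?thesis
    proof (rule eventually_mono[OF eventually_ge_at_top[of C0]])
      fix cS assume cS: "C0 \<le> cS"
      have cS1: "1 \<le> cS" and cS2: "2 * qbar / rho \<le> cS" and cS3: "4 / \<epsilon> \<le> cS"
        and cS4: "2 * D * c \<le> cS" and cS5: "D * c * (48 * (1 / c + 1)) / \<epsilon> \<le> cS"
        using cS by (auto simp: C0_def)
      have cSp: "0 < cS" using cS1 by simp
      define T where "T = nat \<lceil>cS / c\<rceil>"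
      have TL: "cS / c \<le> real T" unfolding T_def by (rule real_nat_ceiling_ge)
      have TU: "real T \<le> cS / c + 1" unfolding T_def using cSp cp by (simp add: of_nat_nat)
      have "0 < cS / c" using cSp cp by simp
      then have Tp: "0 < real T" using TL by linarith
      then have T1: "1 \<le> T" by simp
      define K where "K = (1 + rho) * cS / qbar"
      have TK: "real T \<le> K"
      proof -
        have "1 / c \<le> (1 + 2 * \<theta>) / q1"
        proof -
          have "1 \<le> (1 + 2 * \<theta>) * (1 - \<theta>)" using th by (simp add: algebra_simps power2_eq_square)
          then have "q1 * 1 \<le> q1 * ((1 + 2 * \<theta>) * (1 - \<theta>))" using q1p by (intro mult_left_mono) auto
          then have "q1 \<le> c + \<theta> * (c * 2)" unfolding c_def by (simp add: algebra_simps)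
          then show ?thesis using q1p cp by (simp add: field_simps)
        qed
        also have "\<dots> \<le> (1 + rho / 2) / qbar"
          using th q1p q1b qbar by (intro frac_le) auto
        finally have "1 / c \<le> (1 + rho / 2) / qbar" .
        then have "cS * (1 / c) \<le> cS * ((1 + rho / 2) / qbar)"
          using cSp by (intro mult_left_mono) auto
        then have "cS / c \<le> cS * ((1 + rho / 2) / qbar)" by simp
        moreover have "1 \<le> rho * cS / (2 * qbar)" using cS2 qbar rho by (simp add: field_simps)
        ultimately have "cS / c + 1 \<le> cS * ((1 + rho / 2) / qbar) + rho * cS / (2 * qbar)" by linarith
        also have "\<dots> = K" using qbar by (simp add: K_def field_simps)
        finally show ?thesis using TU by linarith
      qed
      have close: "cS \<le> real T * q g" if "g \<in> pmfs" "\<And>a. \<bar>g a - f1 a\<bar> < e" for g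
      proof -
        have "cS = (cS / c) * c" using cp by simp
        also have "\<dots> \<le> real T * q g" using TL closeq[OF that] cp cSp by (intro mult_mono) auto
        finally show ?thesis .
      qed
      define \<beta> where "\<beta> = 2 * m * exp (-2 * real T * e\<^sup>2)"
      define \<eta> where "\<eta> = real (T + 1) * \<beta>"
      have b0: "0 \<le> \<beta>" by (simp add: \<beta>_def m_def)
      have b\<eta>: "\<beta> \<le> \<eta>" using b0 by (simp add: \<eta>_def mult_le_cancel_right1)
      have \<eta>D: "\<eta> \<le> D / real T"
      proof -
        have ex: "exp (-2 * real T * e\<^sup>2) \<le> 4 / (k * real T)\<^sup>2"
        proof -
          have eq: "-2 * real T * e\<^sup>2 = - (k * real T)" by (simp add: k_def)
          show ?thesis unfolding eq by (rule exp_neg_bound) (use kp Tp in simp)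
        qed
        have "\<eta> \<le> (2 * real T) * (2 * m * (4 / (k * real T)\<^sup>2))"
          unfolding \<eta>_def \<beta>_def using T1 ex m1 by (intro mult_mono) auto
        also have "\<dots> = D / real T"
        proof -
          have g: "(2 * t) * (2 * mm * (4 / (kk * t)\<^sup>2)) = 16 * mm / kk\<^sup>2 / t" if "t > 0" "kk > 0" for t kk mm :: real
            using that by (simp add: power2_eq_square field_simps)
          show ?thesis unfolding D_def by (rule g[OF Tp kp])
        qed
        finally show ?thesis .
      qed
      have \<eta>D2: "\<eta> \<le> D * c / cS"
      proof -
        have "D / real T \<le> D / (cS / c)" using TL Dp cp cSp Tp by (intro divide_left_mono) auto
        also have "D / (cS / c) = D * c / cS" by simp
        finally show ?thesis using \<eta>D by linarith
      qed
      have \<eta>h: "\<eta> \<le> 1/2"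
      proof -
        have "D * c / cS \<le> 1/2" using cS4 cSp by (simp add: field_simps)
        then show ?thesis using \<eta>D2 by linarith
      qed
      have b\<epsilon>: "\<beta> \<le> \<epsilon> / (48 * (1 / c + 1))"
      proof -
        have u: "0 < 48 * (1 / c + 1)" using cp by (smt (verit) divide_pos_pos)
        have g: "a / cc \<le> ee / uu" if "a * uu / ee \<le> cc" "0 < cc" "0 < ee" "0 < uu" for a cc ee uu :: real
          using that by (simp add: field_simps)
        have "D * c / cS \<le> \<epsilon> / (48 * (1 / c + 1))"
          by (rule g[OF _ cSp \<epsilon> u]) (use cS5 in \<open>simp add: mult.assoc\<close>)
        then show ?thesis using \<eta>D2 b\<eta> by linarith
      qed
      have EB: "(\<integral>\<^sup>+ \<omega>. ennreal_of_enat (ipt_time q (fstar cS) cS (cD cS) \<omega>) \<partial>obs_law f1)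
          \<le> ennreal (real T + real (2*(2*T+1)) * (2 * real CARD('a) * exp (-2 * real T * e\<^sup>2))
                     / (1 - real (T + 1) * (2 * real CARD('a) * exp (-2 * real T * e\<^sup>2))))"
      proof (rule exp_bound[where K=K and ?f0.0=f0])
        show "0 < cS" by (fact cSp)
        show "is_fstar q f0 cS n (fstar cS n)" if "1 \<le> n" "\<exists>f\<in>pmfs. cS / real n \<le> q f" for n
          using fstar[OF cSp that] .
        show "cD cS n = 0" if "real n \<le> K" for n using cD_zero[OF cSp] that by (simp add: K_def)
        show "f1 \<in> pmfs" by (fact f1p)
        show "1 \<le> T" by (fact T1)
        show "real T \<le> K" by (fact TK)
        show "0 < e" by (fact ep)
        show "cS \<le> real T * q g" if "g \<in> pmfs" "\<And>a. \<bar>g a - f1 a\<bar> < e" for g using close that by blast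
        show "real (T + 1) * (2 * real CARD('a) * exp (-2 * real T * e\<^sup>2)) < 1"
          using \<eta>h by (simp add: \<eta>_def \<beta>_def m_def)
      qed
      define X where "X = real T + 2 * (2 * real T + 1) * \<beta> / (1 - \<eta>)"
      have EB2: "(\<integral>\<^sup>+ \<omega>. ennreal_of_enat (ipt_time q (fstar cS) cS (cD cS) \<omega>) \<partial>obs_law f1) \<le> ennreal X"
      proof -
        note EB' = EB[folded m_def, folded \<beta>_def, folded \<eta>_def]
        have "real (2*(2*T+1)) * \<beta> / (1 - \<eta>) = 2 * (2 * real T + 1) * \<beta> / (1 - \<eta>)" by simp
        then show ?thesis using EB' by (simp only: X_def)
      qed
      have X0: "0 \<le> X" using b0 \<eta>h by (simp add: X_def)
      have fin: "X / cS \<le> 1 / q1 + \<epsilon>"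
        unfolding X_def
      proof (rule final_real[OF q1p \<epsilon> th(1-3) c_def _ TU cS1 cS3 b0 b\<eta> \<eta>h b\<epsilon>])
        show "1 \<le> real T" using T1 by simp
      qed
      have "?F cS \<le> ennreal X / ennreal cS" by (intro divide_right_mono_ennreal EB2)
      also have "\<dots> = ennreal (X / cS)" using X0 cSp by (rule divide_ennreal)
      also have "\<dots> \<le> ennreal (1 / q1 + \<epsilon>)" using fin by (rule ennreal_leI)
      finally show "?F cS \<le> ennreal (1 / q1 + \<epsilon>)" .
    qed
  qed
  show ?thesis
  proof (rule ennreal_le_epsilon)
    fix \<epsilon> :: real assume \<epsilon>: "0 < \<epsilon>"
    have "Limsup at_top ?F \<le> ennreal (1 / q1 + \<epsilon>)" by (rule Limsup_bounded[OF main[OF \<epsilon>]])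
    also have "\<dots> = ennreal (1 / q f1) + ennreal \<epsilon>" using q1p \<epsilon> by (simp add: q1_def ennreal_plus)
    finally show "Limsup at_top ?F \<le> ennreal (1 / q f1) + ennreal \<epsilon>" .
  qed
qed


end
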